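(* Let $n\geq 1$ be an integer and let $U$ be any $2^n\times 2^n$ unitary matrix, acting on $n$ qubits. Let $\rho$ be the $(n+1)$-qubit density matrix $$\rho=\frac{1}{2^{n+1}}\begin{pmatrix}\mathbb{1} & U^\dagger\\ U & \mathbb{1}\end{pmatrix},$$ written in block form with respect to the computational basis of the first ("clean") qubit. For every $y\in\{0,1\}^n$, the multiplicative negativity $M_y$ of $\rho$ with respect to the bipartition $y$ satisfies $$M_y\leq \frac{5}{4}.$$
   Context: The state $\rho$ lives on one clean qubit tensored with $n$ further qubits, and $\mathbb{1}$ denotes the $2^n\times 2^n$ identity. For $y\in\{0,1\}^n$, let $\rho_y$ denote the partial transpose of $\rho$ taken over those non-clean qubits $i$ with $y_i=1$ (the clean qubit is never transposed); equivalently, if $U_y$ denotes the partial transpose of $U$ over the qubits $i$ with $y_i=1$, then $\rho_y=\frac{1}{2^{n+1}}\begin{pmatrix}\mathbb{1} & U_y^\dagger\\ U_y & \mathbb{1}\end{pmatrix}$. The multiplicative negativity for bipartition $y$ is $M_y=\sum_{\lambda\in\mathrm{spec}(\rho_y)}|\lambda|$, the sum of the absolute values of the eigenvalues of $\rho_y$ (counted with multiplicity). *)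

theory Defs
  imports "Jordan_Normal_Form.Schur_Decomposition" "Jordan_Normal_Form.Char_Poly"
begin

definition unitary_mat :: "nat \<Rightarrow> complex mat \<Rightarrow> bool" where
  "unitary_mat N U \<longleftrightarrow> U \<in> carrier_mat N N \<and> U * mat_adjoint U = 1\<^sub>m N \<and> mat_adjoint U * U = 1\<^sub>m N"

(* the one-clean-qubit state: 1/2^(n+1) [[1, U^dagger],[U, 1]] ; the clean qubit
   is the most significant bit (bit n) of a row/column index in {0..<2^(n+1)},
   the n further qubits are bits 0..n-1 *)
definition clean_state :: "nat \<Rightarrow> complex mat \<Rightarrow> complex mat" where
  "clean_state n U = (1 / 2 ^ (n + 1)) \<cdot>\<^sub>m
     four_block_mat (1\<^sub>m (2 ^ n)) (mat_adjoint U) U (1\<^sub>m (2 ^ n))"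

definition mix_index :: "nat \<Rightarrow> nat set \<Rightarrow> nat \<Rightarrow> nat \<Rightarrow> nat" where
  "mix_index m S a b = (\<Sum>k<m. (if k \<in> S then b div 2 ^ k mod 2 else a div 2 ^ k mod 2) * 2 ^ k)"

definition partial_transpose :: "nat \<Rightarrow> nat set \<Rightarrow> complex mat \<Rightarrow> complex mat" where
  "partial_transpose m S A = mat (2 ^ m) (2 ^ m)
     (\<lambda>(a, b). A $$ (mix_index m S a b, mix_index m S b a))"

definition multiplicative_negativity :: "complex mat \<Rightarrow> real" where
  "multiplicative_negativity A = sum_mset (image_mset cmod (proots (char_poly A)))"

end

theory Submission
  imports Defs
begin



lemma mix_Suc: "mix_index (Suc m) S a b = mix_index m S a b + (if m \<in> S then b div 2 ^ m mod 2 else a div 2 ^ m mod 2) * 2 ^ m"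
  unfolding mix_index_def by simp

lemma mix_lt: "mix_index m S a b < 2 ^ m"
proof (induction m)
  case 0 then show ?case by (simp add: mix_index_def)
next
  case (Suc m)
  have "(if m \<in> S then b div 2 ^ m mod 2 else a div 2 ^ m mod 2) \<le> 1" by auto
  hence "(if m \<in> S then b div 2 ^ m mod 2 else a div 2 ^ m mod 2) * 2 ^ m \<le> 2 ^ m" by simp
  with Suc have "mix_index m S a b + (if m \<in> S then b div 2 ^ m mod 2 else a div 2 ^ m mod 2) * 2 ^ m < 2 ^ m + 2 ^ m"
    by linarith
  then show ?case unfolding mix_Suc by simp
qed

lemma bit_extract_aux:
  fixes X d :: nat assumes X: "X < 2 ^ m" and jm0: "j \<le> m" and d: "d < 2"
  shows "(X + d * 2 ^ m) div 2 ^ j mod 2 = (if j = m then d else X div 2 ^ j mod 2)"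
proof (cases "j = m")
  case True
  have p: "(2::nat) ^ m \<noteq> 0" by simp
  have "(X + d * 2 ^ m) div 2 ^ m = X div 2 ^ m + d" using div_mult_self1[OF p, of X d] by simp
  also have "X div 2 ^ m = 0" using X by simp
  finally show ?thesis using True d by simp
next
  case False
  then have jm: "j < m" using jm0 by simp
  have pw: "(2::nat) ^ m = 2 ^ (m - j) * 2 ^ j"
    by (metis jm le_add_diff_inverse2 less_imp_le power_add)
  have p: "(2::nat) ^ j \<noteq> 0" by simp
  have "(X + d * 2 ^ m) div 2 ^ j = (X + (d * 2 ^ (m - j)) * 2 ^ j) div 2 ^ j"
    unfolding pw by (simp add: mult.assoc)
  also have "\<dots> = X div 2 ^ j + d * 2 ^ (m - j)" using div_mult_self1[OF p, of X "d * 2 ^ (m - j)"] by simp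
  finally have e: "(X + d * 2 ^ m) div 2 ^ j = X div 2 ^ j + d * 2 ^ (m - j)" .
  have "even (d * 2 ^ (m - j))" using jm by simp
  then obtain k where k: "d * 2 ^ (m - j) = 2 * k" by (rule evenE)
  show ?thesis unfolding e k using False by simp
qed

lemma mix_bit: "j < m \<Longrightarrow> mix_index m S a b div 2 ^ j mod 2 = (if j \<in> S then b div 2 ^ j mod 2 else a div 2 ^ j mod 2)"
proof (induction m)
  case 0 then show ?case by simp
next
  case (Suc m)
  define d where "d = (if m \<in> S then b div 2 ^ m mod 2 else a div 2 ^ m mod 2)"
  have d2: "d < 2" unfolding d_def by auto
  have jm: "j \<le> m" using Suc.prems by simp
  have "mix_index (Suc m) S a b div 2 ^ j mod 2 = (if j = m then d else mix_index m S a b div 2 ^ j mod 2)"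
    unfolding mix_Suc d_def[symmetric] by (rule bit_extract_aux[OF mix_lt jm d2])
  then show ?case using Suc d_def by auto
qed

lemma bits_eq:
  fixes a b :: nat
  assumes "a < 2 ^ m" "b < 2 ^ m" "\<And>j. j < m \<Longrightarrow> a div 2 ^ j mod 2 = b div 2 ^ j mod 2"
  shows "a = b"
  using assms
proof (induction m arbitrary: a b)
  case 0 then show ?case by simp
next
  case (Suc m)
  have "a div 2 < 2 ^ m" "b div 2 < 2 ^ m" using Suc.prems(1,2) by auto
  moreover have "a div 2 div 2 ^ j mod 2 = b div 2 div 2 ^ j mod 2" if "j < m" for j
    using Suc.prems(3)[of "Suc j"] that by (simp add: div_mult2_eq)
  ultimately have "a div 2 = b div 2" by (rule Suc.IH)
  moreover have "a mod 2 = b mod 2" using Suc.prems(3)[of 0] by simp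
  ultimately show ?case by (metis div_mult_mod_eq)
qed

lemma mix_invol: "a < 2 ^ m \<Longrightarrow> mix_index m S (mix_index m S a b) (mix_index m S b a) = a"
  by (rule bits_eq[OF mix_lt], assumption) (simp add: mix_bit)

lemma mix_same: "a < 2 ^ m \<Longrightarrow> mix_index m S a a = a"
  by (rule bits_eq[OF mix_lt], assumption) (simp add: mix_bit)




definition mytr :: "nat \<Rightarrow> complex mat \<Rightarrow> complex" where
  "mytr n X = (\<Sum>i<n. X $$ (i,i))"

lemma mytr_comm:
  assumes X: "X \<in> carrier_mat n m" and Y: "Y \<in> carrier_mat m n"
  shows "mytr n (X * Y) = mytr m (Y * X)"
proof -
  have "mytr n (X * Y) = (\<Sum>i<n. \<Sum>k<m. X $$ (i,k) * Y $$ (k,i))"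
    unfolding mytr_def using X Y
    by (intro sum.cong refl) (auto simp: scalar_prod_def atLeast0LessThan)
  also have "\<dots> = (\<Sum>k<m. \<Sum>i<n. Y $$ (k,i) * X $$ (i,k))"
    by (subst sum.swap) (simp add: mult.commute)
  also have "\<dots> = mytr m (Y * X)"
    unfolding mytr_def using X Y
    by (intro sum.cong refl) (auto simp: scalar_prod_def atLeast0LessThan)
  finally show ?thesis .
qed

lemma mytr_sim:
  assumes P: "P \<in> carrier_mat n n" and Q: "Q \<in> carrier_mat n n" and B: "B \<in> carrier_mat n n"
    and QP: "Q * P = 1\<^sub>m n"
  shows "mytr n (P * B * Q) = mytr n B"
proof -
  have "mytr n (P * B * Q) = mytr n (Q * (P * B))"
    by (rule mytr_comm) (use P B Q in auto)
  also have "Q * (P * B) = (Q * P) * B" using P Q B by (simp add: assoc_mult_mat)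
  also have "\<dots> = B" using QP B by simp
  finally show ?thesis .
qed

lemma mytr_sq:
  assumes X: "X \<in> carrier_mat n n"
  shows "mytr n (X * X) = (\<Sum>i<n. \<Sum>k<n. X $$ (i,k) * X $$ (k,i))"
  unfolding mytr_def using X
  by (intro sum.cong refl) (auto simp: scalar_prod_def atLeast0LessThan)

lemma upper_sq_diag:
  assumes X: "X \<in> carrier_mat n n" and ut: "upper_triangular X" and i: "i < n"
  shows "(X * X) $$ (i,i) = X $$ (i,i) * X $$ (i,i)"
proof -
  have "(X * X) $$ (i,i) = (\<Sum>k<n. X $$ (i,k) * X $$ (k,i))"
    using X i by (auto simp: scalar_prod_def atLeast0LessThan)
  also have "\<dots> = (\<Sum>k<n. if k = i then X $$ (i,i) * X $$ (i,i) else 0)"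
  proof (intro sum.cong refl)
    fix k assume k: "k \<in> {..<n}"
    show "X $$ (i,k) * X $$ (k,i) = (if k = i then X $$ (i,i) * X $$ (i,i) else 0)"
    proof (cases "k < i")
      case True then show ?thesis using ut X i unfolding upper_triangular_def by auto
    next
      case False
      show ?thesis
      proof (cases "k = i")
        case False
        with \<open>\<not> k < i\<close> have "i < k" by simp
        then show ?thesis using ut X k False unfolding upper_triangular_def by auto
      qed simp
    qed
  qed
  also have "\<dots> = X $$ (i,i) * X $$ (i,i)" using i by simp
  finally show ?thesis .
qed

lemma numeric:
  fixes t :: "nat \<Rightarrow> real" and c :: real
  assumes c: "c > 0" and sym: "(\<Sum>i<m. \<bar>t i\<bar>) = (\<Sum>i<m. \<bar>2 * c - t i\<bar>)"
    and s1: "(\<Sum>i<m. t i) = 1" and s2: "(\<Sum>i<m. t i ^ 2) = 2 * c" and mc: "real m * c = 1"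
  shows "(\<Sum>i<m. \<bar>t i\<bar>) \<le> 5 / 4"
proof -
  have pt: "\<bar>t i\<bar> + \<bar>2 * c - t i\<bar> \<le> 2 * c + (t i ^ 2 - 2 * c * t i + c ^ 2) / (2 * c)" for i
  proof -
    have "max c \<bar>t i - c\<bar> \<le> c + (t i - c) ^ 2 / (4 * c)"
    proof -
      have "(\<bar>t i - c\<bar> - 2 * c) ^ 2 \<ge> 0" by simp
      hence "4 * c * \<bar>t i - c\<bar> \<le> 4 * c * c + (t i - c) ^ 2"
        by (simp add: power2_eq_square algebra_simps abs_mult_self_eq)
      hence "\<bar>t i - c\<bar> \<le> c + (t i - c) ^ 2 / (4 * c)" using c
        by (simp add: field_simps)
      moreover have "c \<le> c + (t i - c) ^ 2 / (4 * c)" using c by simp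
      ultimately show ?thesis by simp
    qed
    moreover have "\<bar>t i\<bar> + \<bar>2 * c - t i\<bar> = 2 * max c \<bar>t i - c\<bar>" using c by (simp add: max_def abs_if)
    moreover have "(t i - c) ^ 2 / (4 * c) * 2 = (t i ^ 2 - 2 * c * t i + c ^ 2) / (2 * c)"
      using c by (simp add: field_simps power2_eq_square)
    ultimately show ?thesis by (smt (verit) max.bounded_iff)
  qed
  have "2 * (\<Sum>i<m. \<bar>t i\<bar>) = (\<Sum>i<m. \<bar>t i\<bar> + \<bar>2 * c - t i\<bar>)"
    using sym by (simp add: sum.distrib)
  also have "\<dots> \<le> (\<Sum>i<m. 2 * c + (t i ^ 2 - 2 * c * t i + c ^ 2) / (2 * c))"
    by (rule sum_mono) (rule pt)
  also have "\<dots> = 2 * c * real m + ((\<Sum>i<m. t i ^ 2) - 2 * c * (\<Sum>i<m. t i) + real m * c ^ 2) / (2 * c)"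
    by (simp add: sum.distrib sum_divide_distrib[symmetric] sum_subtractf sum_distrib_left)
  also have "\<dots> = 5 / 2" using c mc s1 s2
    by (simp add: field_simps power2_eq_square)
  finally show ?thesis by simp
qed




lemma adj_carrier: "U \<in> carrier_mat N N \<Longrightarrow> mat_adjoint U \<in> carrier_mat N N"
  unfolding mat_adjoint_def by (auto simp: mat_of_rows_def)

lemma adj_idx: "U \<in> carrier_mat N N \<Longrightarrow> i < N \<Longrightarrow> j < N \<Longrightarrow> mat_adjoint U $$ (i,j) = cnj (U $$ (j,i))"
  unfolding mat_adjoint_def by (auto simp: mat_of_rows_def)

lemma C_carrier: "U \<in> carrier_mat (2^n) (2^n) \<Longrightarrow> clean_state n U \<in> carrier_mat (2 * 2^n) (2 * 2^n)"
  unfolding clean_state_def using adj_carrier[of U "2^n"] by auto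

lemma C_idx:
  assumes U: "U \<in> carrier_mat (2^n) (2^n)" and p: "p < 2 * 2^n" and q: "q < 2 * 2^n"
  shows "clean_state n U $$ (p,q) = (1 / 2 ^ (n+1)) * (if p < 2^n then if q < 2^n then (if p = q then 1 else 0) else cnj (U $$ (q - 2^n, p))
     else if q < 2^n then U $$ (p - 2^n, q) else (if p = q then 1 else 0))"
proof -
  have adj: "mat_adjoint U \<in> carrier_mat (2^n) (2^n)" using adj_carrier[OF U] .
  show ?thesis unfolding clean_state_def using p q U adj
    by (auto simp: adj_idx[OF U])
qed

lemma C_herm:
  assumes U: "U \<in> carrier_mat (2^n) (2^n)" and p: "p < 2 * 2^n" and q: "q < 2 * 2^n"
  shows "clean_state n U $$ (p,q) = cnj (clean_state n U $$ (q,p))"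
  unfolding C_idx[OF U p q] C_idx[OF U q p] by auto

lemma mix_top:
  assumes a: "a < 2 * 2^n" and nS: "n \<notin> S"
  shows "mix_index (Suc n) S a b = mix_index n S a b + (if a < 2^n then 0 else 2^n)"
proof -
  have "a div 2 ^ n < 2" using a by (simp add: div_less_iff_less_mult)
  moreover have "a div 2 ^ n = 0 \<longleftrightarrow> a < 2 ^ n" by (simp add: div_eq_0_iff)
  ultimately have "a div 2 ^ n mod 2 = (if a < 2 ^ n then 0 else 1)" by auto
  then show ?thesis unfolding mix_Suc using nS by simp
qed




lemma C_tr2:
  assumes U: "unitary_mat (2^n) U"
  shows "(\<Sum>p<2*2^n. \<Sum>q<2*2^n. clean_state n U $$ (p,q) * clean_state n U $$ (q,p)) = 2 / 2^(n+1)"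
proof -
  let ?N = "2^n :: nat"
  have Uc: "U \<in> carrier_mat ?N ?N" and UU: "mat_adjoint U * U = 1\<^sub>m ?N" and UU2: "U * mat_adjoint U = 1\<^sub>m ?N"
    using U unfolding unitary_mat_def by auto
  have Ac: "mat_adjoint U \<in> carrier_mat ?N ?N" using adj_carrier[OF Uc] .
  define F where "F = four_block_mat (1\<^sub>m ?N) (mat_adjoint U) U (1\<^sub>m ?N)"
  have Fc: "F \<in> carrier_mat (2*?N) (2*?N)" unfolding F_def using Uc Ac by auto
  have FF: "F * F = four_block_mat (1\<^sub>m ?N * 1\<^sub>m ?N + mat_adjoint U * U) (1\<^sub>m ?N * mat_adjoint U + mat_adjoint U * 1\<^sub>m ?N)
    (U * 1\<^sub>m ?N + 1\<^sub>m ?N * U) (U * mat_adjoint U + 1\<^sub>m ?N * 1\<^sub>m ?N)"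
    unfolding F_def by (rule mult_four_block_mat) (use Uc Ac in auto)
  have FFd: "(F * F) $$ (p,p) = 2" if p: "p < 2*?N" for p
  proof -
    have c1: "1\<^sub>m ?N * 1\<^sub>m ?N + mat_adjoint U * U \<in> carrier_mat ?N ?N" using Uc Ac by auto
    have c4: "U * mat_adjoint U + 1\<^sub>m ?N * 1\<^sub>m ?N \<in> carrier_mat ?N ?N" using Uc Ac by auto
    show ?thesis unfolding FF using p c1 c4 Uc Ac unfolding UU UU2 by auto
  qed
  define c :: complex where "c = 1 / 2 ^ (n+1)"
  have C: "clean_state n U = c \<cdot>\<^sub>m F" unfolding clean_state_def F_def c_def ..
  have CC: "clean_state n U * clean_state n U = (c * c) \<cdot>\<^sub>m (F * F)"
  proof -
    have "(c \<cdot>\<^sub>m F) * (c \<cdot>\<^sub>m F) = c \<cdot>\<^sub>m (F * (c \<cdot>\<^sub>m F))"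
      by (rule mult_smult_assoc_mat) (use Fc in auto)
    also have "F * (c \<cdot>\<^sub>m F) = c \<cdot>\<^sub>m (F * F)" by (rule mult_smult_distrib) (use Fc in auto)
    also have "c \<cdot>\<^sub>m (c \<cdot>\<^sub>m (F * F)) = (c * c) \<cdot>\<^sub>m (F * F)" by (rule eq_matI) auto
    finally show ?thesis unfolding C .
  qed
  have "(\<Sum>p<2*2^n. \<Sum>q<2*2^n. clean_state n U $$ (p,q) * clean_state n U $$ (q,p)) = mytr (2*2^n) (clean_state n U * clean_state n U)"
    by (rule mytr_sq[symmetric]) (rule C_carrier[OF Uc])
  also have "\<dots> = (\<Sum>p<2*2^n::nat. c * c * 2)"
    unfolding mytr_def CC using Fc FFd by (intro sum.cong refl) auto
  also have "\<dots> = 2 / 2^(n+1)" unfolding c_def by (simp add: field_simps)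
  finally show ?thesis .
qed

context
  fixes n :: nat and U :: "complex mat" and S :: "nat set"
  assumes Uc: "U \<in> carrier_mat (2^n) (2^n)" and Ssub: "S \<subseteq> {..<n}"
begin

abbreviation "AA \<equiv> partial_transpose (n + 1) S (clean_state n U)"
abbreviation "mx a b \<equiv> mix_index (n+1) S a b"

lemma nS: "n \<notin> S" using Ssub by auto

lemma A_carrier: "AA \<in> carrier_mat (2*2^n) (2*2^n)"
  unfolding partial_transpose_def by auto

lemma A_idx: "a < 2*2^n \<Longrightarrow> b < 2*2^n \<Longrightarrow> AA $$ (a,b) = clean_state n U $$ (mx a b, mx b a)"
  unfolding partial_transpose_def by auto

lemma mx_lt: "mx a b < 2 * 2^n" using mix_lt[of "n+1" S a b] by simp

lemma A_herm: "a < 2*2^n \<Longrightarrow> b < 2*2^n \<Longrightarrow> AA $$ (a,b) = cnj (AA $$ (b,a))"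
  unfolding A_idx by (rule C_herm[OF Uc mx_lt mx_lt])

lemma A_diag: "a < 2*2^n \<Longrightarrow> AA $$ (a,a) = 1 / 2^(n+1)"
  unfolding A_idx using mix_same[of a "n+1" S] C_idx[OF Uc, of a a] by simp

lemma mx_half: "a < 2*2^n \<Longrightarrow> mx a b < 2^n \<longleftrightarrow> a < 2^n"
  using mix_top[OF _ nS, of a b] mix_lt[of n S a b] by auto

lemma mx_eq: "a < 2*2^n \<Longrightarrow> b < 2*2^n \<Longrightarrow> mx a b = mx b a \<longleftrightarrow> a = b"
proof
  assume a: "a < 2*2^n" and b: "b < 2*2^n" and e: "mx a b = mx b a"
  have "a = mix_index (n+1) S (mx a b) (mx b a)" using mix_invol[of a "n+1" S b] a by simp
  also have "\<dots> = mix_index (n+1) S (mx b a) (mx a b)" using e by simp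
  also have "\<dots> = b" using mix_invol[of b "n+1" S a] b by simp
  finally show "a = b" .
qed simp

lemma A_blk:
  assumes a: "a < 2*2^n" and b: "b < 2*2^n" and h: "a < 2^n \<longleftrightarrow> b < 2^n"
  shows "AA $$ (a,b) = (if a = b then 1 / 2^(n+1) else 0)"
  unfolding A_idx[OF a b] C_idx[OF Uc mx_lt mx_lt] using mx_half[OF a, of b] mx_half[OF b, of a] h mx_eq[OF a b]
  by auto

lemma A_tr2: "(\<Sum>a<2*2^n. \<Sum>b<2*2^n. AA $$ (a,b) * AA $$ (b,a))
   = (\<Sum>p<2*2^n. \<Sum>q<2*2^n. clean_state n U $$ (p,q) * clean_state n U $$ (q,p))"
proof -
  let ?C = "clean_state n U"
  let ?I = "{..<2*2^n::nat}"
  define g where "g = (\<lambda>(p,q). ?C $$ (p,q) * ?C $$ (q,p))"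
  define \<sigma> where "\<sigma> = (\<lambda>(a,b). (mx a b, mx b a))"
  have "(\<Sum>a<2*2^n. \<Sum>b<2*2^n. AA $$ (a,b) * AA $$ (b,a)) = (\<Sum>(a,b)\<in>?I \<times> ?I. g (\<sigma> (a,b)))"
    unfolding sum.cartesian_product g_def \<sigma>_def using A_idx by (intro sum.cong refl) auto
  also have "\<dots> = (\<Sum>x\<in>?I \<times> ?I. g x)"
  proof (rule sum.reindex_bij_witness[of _ \<sigma> \<sigma>])
    fix x assume "x \<in> ?I \<times> ?I"
    then show "\<sigma> (\<sigma> x) = x" "\<sigma> x \<in> ?I \<times> ?I"
      unfolding \<sigma>_def using mix_invol[of _ "n+1" S] mx_lt by (auto split: prod.splits)
  next
    fix x assume "x \<in> ?I \<times> ?I"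
    then show "\<sigma> (\<sigma> x) = x" "\<sigma> x \<in> ?I \<times> ?I"
      unfolding \<sigma>_def using mix_invol[of _ "n+1" S] mx_lt by (auto split: prod.splits)
  qed (auto simp: g_def \<sigma>_def split: prod.splits)
  also have "\<dots> = (\<Sum>p<2*2^n. \<Sum>q<2*2^n. ?C $$ (p,q) * ?C $$ (q,p))"
    unfolding sum.cartesian_product g_def by simp
  finally show ?thesis .
qed

end



lemma herm_real:
  fixes A :: "complex mat"
  assumes Ac: "A \<in> carrier_mat m m" and H: "\<And>i j. i < m \<Longrightarrow> j < m \<Longrightarrow> A $$ (i,j) = cnj (A $$ (j,i))"
    and ev: "eigenvalue A k"
  shows "Im k = 0"
proof -
  obtain v where v: "v \<in> carrier_vec m" "v \<noteq> 0\<^sub>v m" "A *\<^sub>v v = k \<cdot>\<^sub>v v"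
    using ev Ac unfolding eigenvalue_def eigenvector_def by auto
  have row: "(\<Sum>j<m. A $$ (i,j) * v $ j) = k * v $ i" if i: "i < m" for i
  proof -
    have "(A *\<^sub>v v) $ i = (\<Sum>j<m. A $$ (i,j) * v $ j)"
      using i Ac v(1) by (auto simp: scalar_prod_def atLeast0LessThan)
    then show ?thesis using v(3) i v(1) by simp
  qed
  obtain i0 where i0: "i0 < m" "v $ i0 \<noteq> 0"
  proof -
    have "\<exists>i<m. v $ i \<noteq> 0"
    proof (rule ccontr)
      assume "\<not> ?thesis"
      then have "v = 0\<^sub>v m" using v(1) by (intro eq_vecI) auto
      then show False using v(2) by simp
    qed
    then show ?thesis using that by blast
  qed
  define Q where "Q = (\<Sum>i<m. \<Sum>j<m. cnj (v $ i) * A $$ (i,j) * v $ j)"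
  define R where "R = (\<Sum>i<m. cnj (v $ i) * v $ i)"
  have QR: "Q = k * R"
  proof -
    have "Q = (\<Sum>i<m. cnj (v $ i) * (\<Sum>j<m. A $$ (i,j) * v $ j))"
      unfolding Q_def by (simp add: sum_distrib_left mult.assoc)
    also have "\<dots> = (\<Sum>i<m. cnj (v $ i) * (k * v $ i))" using row by simp
    also have "\<dots> = k * R" unfolding R_def by (simp add: sum_distrib_left algebra_simps)
    finally show ?thesis .
  qed
  have H': "cnj (A $$ (i,j)) = A $$ (j,i)" if "i < m" "j < m" for i j
    using H[OF that(2,1)] by simp
  have "cnj Q = (\<Sum>i<m. \<Sum>j<m. v $ i * A $$ (j,i) * cnj (v $ j))"
    unfolding Q_def by (simp add: H' mult.commute)
  also have "\<dots> = (\<Sum>j<m. \<Sum>i<m. cnj (v $ j) * A $$ (j,i) * v $ i)"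
    by (subst sum.swap) (simp add: mult.commute mult.left_commute)
  also have "\<dots> = Q" unfolding Q_def ..
  finally have "Im (cnj Q) = Im Q" by simp
  then have "Im Q = 0" by simp
  have Rr: "R = of_real (\<Sum>i<m. (cmod (v $ i))\<^sup>2)"
  proof -
    have "cnj (v $ i) * v $ i = of_real ((cmod (v $ i))\<^sup>2)" for i
      by (subst complex_norm_square) (simp add: mult.commute)
    then show ?thesis unfolding R_def of_real_sum by simp
  qed
  have Rpos: "(\<Sum>i<m. (cmod (v $ i))\<^sup>2) > 0"
  proof -
    have "(cmod (v $ i0))\<^sup>2 \<le> (\<Sum>i<m. (cmod (v $ i))\<^sup>2)"
      by (rule member_le_sum) (use i0 in auto)
    moreover have "(cmod (v $ i0))\<^sup>2 > 0" using i0 by simp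
    ultimately show ?thesis by linarith
  qed
  have "Im Q = Im k * (\<Sum>i<m. (cmod (v $ i))\<^sup>2)" unfolding QR Rr by simp
  with \<open>Im Q = 0\<close> Rpos show ?thesis by simp
qed

lemma proots_lin: "proots (\<Prod>a\<leftarrow>xs. [:- a, 1:]) = mset (xs :: complex list)"
proof (induction xs)
  case Nil then show ?case by simp
next
  case (Cons x xs)
  have nz: "[:- a, 1:] \<noteq> (0 :: complex poly)" for a by simp
  have nz': "0 \<notin> (\<lambda>a. [:- a, 1:]) ` set xs" using nz by (metis (no_types, lifting) imageE)
  have "(\<Prod>a\<leftarrow>xs. [:- a, 1:]) \<noteq> 0" using nz' by (simp add: prod_list_zero_iff)
  then have "proots ([:- x, 1:] * (\<Prod>a\<leftarrow>xs. [:- a, 1:])) = proots [:- x, 1:] + proots (\<Prod>a\<leftarrow>xs. [:- a, 1:])"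
    using nz by (intro proots_mult) auto
  moreover have "proots [:- x, 1:] = {#x#}" using proots_linear_factor[of "-x"] by simp
  ultimately show ?case using Cons by simp
qed




theorem theorem1:
  fixes n :: nat and U :: "complex mat" and S :: "nat set"
  assumes "n \<ge> 1"
    and "unitary_mat (2 ^ n) U"
    and "S \<subseteq> {..<n}"
  shows "multiplicative_negativity (partial_transpose (n + 1) S (clean_state n U)) \<le> 5 / 4"
proof -
  have Uc: "U \<in> carrier_mat (2^n) (2^n)" using assms(2) unfolding unitary_mat_def by auto
  note Ssub = assms(3)
  define M :: nat where "M = 2 * 2^n"
  define A where "A = partial_transpose (n + 1) S (clean_state n U)"
  define c :: complex where "c = 1 / 2^(n+1)"
  have Ac: "A \<in> carrier_mat M M" unfolding A_def M_def using A_carrier[OF Uc Ssub] .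
  obtain as where cp: "char_poly A = (\<Prod>a\<leftarrow>as. [:- a, 1:])" and las: "length as = M"
    using char_poly_factorized[OF Ac] by blast
  obtain B P Q where sd: "schur_decomposition A as = (B,P,Q)" by (cases "schur_decomposition A as") auto
  from schur_decomposition[OF Ac cp sd] have sim: "similar_mat_wit A B P Q" and ut: "upper_triangular B"
    and dB: "diag_mat B = as" by auto
  note sw = similar_mat_witD2[OF Ac sim]
  have Bc: "B \<in> carrier_mat M M" and Pc: "P \<in> carrier_mat M M" and Qc: "Q \<in> carrier_mat M M"
    and PQ: "P * Q = 1\<^sub>m M" and QP: "Q * P = 1\<^sub>m M" and APBQ: "A = P * B * Q" using sw by auto
  have asi: "as ! i = B $$ (i,i)" if "i < M" for i
    using that Bc dB[symmetric] unfolding diag_mat_def by auto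
  have neg: "multiplicative_negativity A = (\<Sum>i<M. cmod (as ! i))"
    unfolding multiplicative_negativity_def cp proots_lin
  proof -
    have "image_mset cmod (mset as) = mset (map cmod as)" by simp
    then have "sum_mset (image_mset cmod (mset as)) = sum_list (map cmod as)" by (simp only: sum_mset_sum_list)
    also have "\<dots> = (\<Sum>i<M. cmod (as ! i))" by (simp add: sum_list_sum_nth las atLeast0LessThan)
    finally show "sum_mset (image_mset cmod (mset as)) = (\<Sum>i<M. cmod (as ! i))" .
  qed
  have herm: "\<And>i j. i < M \<Longrightarrow> j < M \<Longrightarrow> A $$ (i,j) = cnj (A $$ (j,i))"
    unfolding A_def M_def using A_herm[OF Uc Ssub] by blast
  have real: "Im (as ! i) = 0" if i: "i < M" for i
  proof (rule herm_real[OF Ac herm])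
    have "poly (char_poly A) (as ! i) = 0" unfolding cp using i las
      by (auto simp: poly_prod_list prod_list_zero_iff)
    then show "eigenvalue A (as ! i)" using eigenvalue_root_char_poly[OF Ac] by simp
  qed
  have s1: "(\<Sum>i<M. as ! i) = 1"
  proof -
    have "(\<Sum>i<M. as ! i) = mytr M B" unfolding mytr_def using asi by simp
    also have "\<dots> = mytr M A" unfolding APBQ by (rule mytr_sim[symmetric, OF Pc Qc Bc QP])
    also have "\<dots> = (\<Sum>i<M. c)" unfolding mytr_def A_def M_def c_def
      using A_diag[OF Uc Ssub] by simp
    also have "\<dots> = 1" unfolding c_def M_def by simp
    finally show ?thesis .
  qed
  have s2: "(\<Sum>i<M. as ! i * as ! i) = 2 * c"
  proof -
    have "(\<Sum>i<M. as ! i * as ! i) = mytr M (B * B)" unfolding mytr_def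
      using asi upper_sq_diag[OF Bc ut] by simp
    also have "\<dots> = mytr M (P * (B * B) * Q)" by (rule mytr_sim[symmetric, OF Pc Qc _ QP]) (use Bc in auto)
    also have "P * (B * B) * Q = A * A"
    proof -
      have "A * A = P * B * (Q * P) * B * Q" unfolding APBQ using Pc Qc Bc
        by (simp add: assoc_mult_mat[of _ M M _ M _ M])
      also have "\<dots> = P * (B * B) * Q" unfolding QP using Pc Qc Bc
        by (simp add: assoc_mult_mat[of _ M M _ M _ M])
      finally show ?thesis by simp
    qed
    also have "mytr M (A * A) = (\<Sum>a<M. \<Sum>b<M. A $$ (a,b) * A $$ (b,a))" by (rule mytr_sq[OF Ac])
    also have "\<dots> = 2 * c" unfolding A_def M_def c_def
      using A_tr2[OF Uc Ssub] C_tr2[OF assms(2)] by simp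
    finally show ?thesis .
  qed
  define s :: "nat \<Rightarrow> complex" where "s = (\<lambda>i. if i < 2^n then 1 else -1)"
  define J :: "complex mat" where "J = mat M M (\<lambda>(i,j). if i = j then s i else 0)"
  have Jc: "J \<in> carrier_mat M M" unfolding J_def by auto
  define A' where "A' = (2 * c) \<cdot>\<^sub>m 1\<^sub>m M - A"
  define B' where "B' = (2 * c) \<cdot>\<^sub>m 1\<^sub>m M - B"
  have Jrow: "(J * X) $$ (a,b) = s a * X $$ (a,b)"
    if X: "X \<in> carrier_mat M M" and a: "a < M" and b: "b < M" for X a b
  proof -
    have "(J * X) $$ (a,b) = (\<Sum>k<M. J $$ (a,k) * X $$ (k,b))"
      using X a b Jc by (auto simp: scalar_prod_def atLeast0LessThan)
    also have "\<dots> = (\<Sum>k<M. if a = k then s a * X $$ (k,b) else 0)"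
      using a by (intro sum.cong refl) (auto simp: J_def)
    also have "\<dots> = s a * X $$ (a,b)" using a by simp
    finally show ?thesis .
  qed
  have Jcol: "(X * J) $$ (a,b) = X $$ (a,b) * s b"
    if X: "X \<in> carrier_mat M M" and a: "a < M" and b: "b < M" for X a b
  proof -
    have "(X * J) $$ (a,b) = (\<Sum>k<M. X $$ (a,k) * J $$ (k,b))"
      using X a b Jc by (auto simp: scalar_prod_def atLeast0LessThan)
    also have "\<dots> = (\<Sum>k<M. if k = b then X $$ (a,k) * s b else 0)"
      using b by (intro sum.cong refl) (auto simp: J_def)
    also have "\<dots> = X $$ (a,b) * s b" using b by simp
    finally show ?thesis .
  qed
  have ss: "s a * s a = 1" for a unfolding s_def by simp
  have JJ: "J * J = 1\<^sub>m M"
  proof (rule eq_matI)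
    fix a b assume "a < dim_row (1\<^sub>m M)" "b < dim_col (1\<^sub>m M)"
    then have a: "a < M" and b: "b < M" by auto
    show "(J * J) $$ (a,b) = 1\<^sub>m M $$ (a,b)" unfolding Jrow[OF Jc a b] using a b ss
      by (simp add: J_def)
  qed (use Jc in auto)
  have A'J: "A' = J * A * J"
  proof (rule eq_matI)
    fix a b assume a: "a < dim_row (J * A * J)" and b: "b < dim_col (J * A * J)"
    then have a': "a < M" and b': "b < M" using Jc by auto
    have JA: "J * A \<in> carrier_mat M M" using Jc Ac by auto
    have "(J * A * J) $$ (a,b) = s a * A $$ (a,b) * s b"
      using Jcol[OF JA a' b'] Jrow[OF Ac a' b'] by simp
    also have "\<dots> = A' $$ (a,b)"
    proof (cases "a < 2^n \<longleftrightarrow> b < 2^n")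
      case True
      then have "A $$ (a,b) = (if a = b then c else 0)" unfolding A_def c_def
        using A_blk[OF Uc Ssub, of a b] a' b' M_def by simp
      then show ?thesis unfolding A'_def using a' b' Ac True ss by (auto simp: s_def)
    next
      case False
      then have "a \<noteq> b" by auto
      then show ?thesis unfolding A'_def using a' b' Ac False by (auto simp: s_def)
    qed
    finally show "A' $$ (a,b) = (J * A * J) $$ (a,b)" by simp
  qed (use Ac Jc in \<open>auto simp: A'_def\<close>)
  have "similar_mat A' A" unfolding similar_mat_def similar_mat_wit_def Let_def
    using A'J Jc Ac JJ by (intro exI[of _ J]) (auto simp: A'_def)
  then have cpA': "char_poly A' = char_poly A" by (rule char_poly_similar)
  have A'B': "A' = P * B' * Q"
  proof -
    have I: "(2 * c) \<cdot>\<^sub>m 1\<^sub>m M \<in> carrier_mat M M" by simp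
    have "P * B' = P * ((2 * c) \<cdot>\<^sub>m 1\<^sub>m M) - P * B" unfolding B'_def
      by (rule mult_minus_distrib_mat[OF Pc I Bc])
    also have "P * ((2 * c) \<cdot>\<^sub>m 1\<^sub>m M) = (2 * c) \<cdot>\<^sub>m P"
      using mult_smult_distrib[OF Pc one_carrier_mat[of M], of "2*c"] Pc by simp
    finally have e1: "P * B' = (2 * c) \<cdot>\<^sub>m P - P * B" .
    have PB: "P * B \<in> carrier_mat M M" using Pc Bc by simp
    have PcI: "(2 * c) \<cdot>\<^sub>m P \<in> carrier_mat M M" using Pc by simp
    have "P * B' * Q = (2 * c) \<cdot>\<^sub>m P * Q - P * B * Q" unfolding e1
      by (rule minus_mult_distrib_mat[OF PcI PB Qc])
    also have "(2 * c) \<cdot>\<^sub>m P * Q = (2 * c) \<cdot>\<^sub>m (P * Q)" by (rule mult_smult_assoc_mat[OF Pc Qc])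
    finally have "P * B' * Q = (2 * c) \<cdot>\<^sub>m (P * Q) - P * B * Q" .
    then show ?thesis unfolding A'_def PQ APBQ by simp
  qed
  have B'c: "B' \<in> carrier_mat M M" unfolding B'_def using Bc by auto
  have utB': "upper_triangular B'" using ut Bc unfolding B'_def upper_triangular_def by auto
  have dB': "diag_mat B' = map (\<lambda>a. 2 * c - a) as"
    unfolding B'_def using Bc dB[symmetric] las by (auto simp: diag_mat_def)
  have "similar_mat A' B'" unfolding similar_mat_def similar_mat_wit_def Let_def
    using A'B' Pc Qc B'c PQ QP by (intro exI[of _ P] exI[of _ Q]) (auto simp: A'_def Ac)
  then have "char_poly A' = char_poly B'" by (rule char_poly_similar)
  also have "\<dots> = (\<Prod>a\<leftarrow>map (\<lambda>a. 2 * c - a) as. [:- a, 1:])"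
    using char_poly_upper_triangular[OF B'c utB'] dB' by simp
  finally have "mset as = mset (map (\<lambda>a. 2 * c - a) as)"
    using cpA' cp proots_lin by metis
  then have "sum_list (map cmod as) = sum_list (map cmod (map (\<lambda>a. 2 * c - a) as))"
    by (metis mset_map sum_mset_sum_list)
  then have symc: "(\<Sum>i<M. cmod (as ! i)) = (\<Sum>i<M. cmod (2 * c - as ! i))"
    by (simp add: sum_list_sum_nth las atLeast0LessThan)
  define t where "t i = Re (as ! i)" for i
  define cr :: real where "cr = 1 / 2^(n+1)"
  have cc: "c = of_real cr" unfolding c_def cr_def by simp
  have asr: "as ! i = of_real (t i)" if "i < M" for i using real[OF that] unfolding t_def
    by (simp add: complex_eq_iff)
  have e1: "(\<Sum>i<M. \<bar>t i\<bar>) = (\<Sum>i<M. \<bar>2 * cr - t i\<bar>)"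
  proof -
    have "(\<Sum>i<M. \<bar>t i\<bar>) = (\<Sum>i<M. cmod (as ! i))" using asr by (intro sum.cong refl) simp
    also have "\<dots> = (\<Sum>i<M. cmod (2 * c - as ! i))" by (rule symc)
    also have "\<dots> = (\<Sum>i<M. \<bar>2 * cr - t i\<bar>)" using asr cc
    proof (intro sum.cong refl)
      fix i assume "i \<in> {..<M}"
      then have "2 * c - as ! i = of_real (2 * cr - t i)" using asr cc by simp
      then show "cmod (2 * c - as ! i) = \<bar>2 * cr - t i\<bar>" by (simp only: norm_of_real)
    qed
    finally show ?thesis .
  qed
  have e2: "(\<Sum>i<M. t i) = 1"
  proof -
    have "complex_of_real (\<Sum>i<M. t i) = (\<Sum>i<M. as ! i)" unfolding of_real_sum using asr by simp
    then have "complex_of_real (\<Sum>i<M. t i) = 1" using s1 by simp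
    then show ?thesis by (simp only: of_real_eq_1_iff)
  qed
  have e3: "(\<Sum>i<M. t i ^ 2) = 2 * cr"
  proof -
    have "complex_of_real (\<Sum>i<M. t i ^ 2) = (\<Sum>i<M. as ! i * as ! i)" unfolding of_real_sum
      using asr by (simp add: power2_eq_square)
    then have "of_real (\<Sum>i<M. t i ^ 2) = (of_real (2 * cr) :: complex)" using s2 cc by simp
    then show ?thesis using of_real_eq_iff by blast
  qed
  have mc: "real M * cr = 1" unfolding M_def cr_def by simp
  have "(\<Sum>i<M. \<bar>t i\<bar>) \<le> 5 / 4" by (rule numeric[OF _ e1 e2 e3 mc]) (simp add: cr_def)
  moreover have "multiplicative_negativity A = (\<Sum>i<M. \<bar>t i\<bar>)" unfolding neg
    using asr by (intro sum.cong refl) simp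
  ultimately show ?thesis unfolding A_def by simp
qed



end
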